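(* Let $P=(p_1,\dots,p_S)$ be a probability distribution on $\{1,\dots,S\}$ and $\hat P_n$ the empirical distribution of $n$ i.i.d. samples from $P$. Then, as $n\to\infty$, the bias $b=\mathbb E[Q(\hat P_n)]-Q(P)$ satisfies $|b|=\mathcal O\big(S\log(n)/n\big)$, i.e. $b^2=\mathcal O\big((S\log(n)/n)^2\big)$.
   Context: For a probability vector $P=(p_1,\dots,p_S)$, $Q(P)=\sum_{k=1}^S p_k\log^2(p_k)$, with the convention $0\log^2 0=0$. The empirical distribution is $\hat P_n=(N_1/n,\dots,N_S/n)$ where $N_k$ is the number of samples equal to $k$. *)

theory Defs
  imports "HOL-Probability.Probability"
begin

text \<open>Q(P) = sum_{k=1}^S p_k (log p_k)^2 (natural log); the convention 0 log^2 0 = 0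
  holds automatically since the term is multiplied by p_k = 0.\<close>
definition Qfun :: "nat \<Rightarrow> (nat \<Rightarrow> real) \<Rightarrow> real" where
  "Qfun S p = (\<Sum>k\<in>{1..S}. p k * (ln (p k))\<^sup>2)"

definition samples :: "nat \<Rightarrow> nat pmf \<Rightarrow> (nat \<Rightarrow> nat) pmf" where
  "samples n P = Pi_pmf {..<n} 0 (\<lambda>_. P)"

definition empirical :: "nat \<Rightarrow> (nat \<Rightarrow> nat) \<Rightarrow> nat \<Rightarrow> real" where
  "empirical n \<omega> k = real (card {i\<in>{..<n}. \<omega> i = k}) / real n"

definition bias :: "nat \<Rightarrow> nat pmf \<Rightarrow> nat \<Rightarrow> real" where
  "bias S P n = measure_pmf.expectation (samples n P) (\<lambda>\<omega>. Qfun S (empirical n \<omega>))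
               - Qfun S (pmf P)"

end

theory Submission
  imports Defs
begin


lemma L1: assumes "(v::real) \<ge> 1" shows "2 * v * ln v \<le> v\<^sup>2 - 1"
proof -
  have "(\<lambda>v. v\<^sup>2 - 1 - 2 * v * ln v) 1 \<le> (\<lambda>v. v\<^sup>2 - 1 - 2 * v * ln v) v"
  proof (rule DERIV_nonneg_imp_nondecreasing[OF assms])
    fix x :: real assume x: "1 \<le> x" "x \<le> v"
    show "\<exists>y. DERIV (\<lambda>v. v\<^sup>2 - 1 - 2 * v * ln v) x :> y \<and> y \<ge> 0"
      apply (rule exI[of _ "2*x - 2 * ln x - 2"])
      using x ln_le_minus_one[of x]
      by (auto intro!: derivative_eq_intros simp: field_simps)
  qed
  thus ?thesis by simp
qed

lemma L2: assumes "0 < (v::real)" "v \<le> 1" shows "- 2 * v * ln v \<le> 1 - v\<^sup>2"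
proof -
  have "(\<lambda>v. 1 - v\<^sup>2 + 2 * v * ln v) v \<ge> (\<lambda>v. 1 - v\<^sup>2 + 2 * v * ln v) 1"
  proof (rule DERIV_nonpos_imp_nonincreasing[OF assms(2)])
    fix x :: real assume x: "v \<le> x" "x \<le> 1"
    show "\<exists>y. DERIV (\<lambda>v. 1 - v\<^sup>2 + 2 * v * ln v) x :> y \<and> y \<le> 0"
      apply (rule exI[of _ "-2*x + 2 * ln x + 2"])
      using x assms ln_le_minus_one[of x]
      by (auto intro!: derivative_eq_intros simp: field_simps)
  qed
  thus ?thesis by simp
qed

lemma L3: assumes "(u::real) > 0" shows "u * (ln u)\<^sup>2 \<le> (u - 1)\<^sup>2"
proof -
  define v where "v = sqrt u"
  have v: "v > 0" "v\<^sup>2 = u" using assms by (auto simp: v_def)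
  have lu: "ln u = 2 * ln v" using assms by (simp add: v_def ln_sqrt)
  have "u * (ln u)\<^sup>2 = (2 * v * ln v)\<^sup>2" using v lu by (simp add: power2_eq_square)
  also have "\<dots> \<le> (v\<^sup>2 - 1)\<^sup>2"
  proof (cases "v \<ge> 1")
    case True
    have "0 \<le> 2 * v * ln v" using True by simp
    thus ?thesis using L1[OF True] by (intro power_mono) auto
  next
    case False
    have "0 \<le> - 2 * v * ln v" using False v by (simp add: mult_nonneg_nonpos)
    hence "(- 2 * v * ln v)\<^sup>2 \<le> (1 - v\<^sup>2)\<^sup>2" using L2[of v] False v by (intro power_mono) auto
    thus ?thesis by (simp add: power2_eq_square algebra_simps)
  qed
  finally show ?thesis using v by simp
qed

lemma L4: assumes "(u::real) > 0" shows "0 \<le> u * ln u - u + 1" "u * ln u - u + 1 \<le> (u - 1)\<^sup>2"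
proof -
  have "ln (1/u) \<le> 1/u - 1" using assms by (intro ln_le_minus_one) auto
  hence "- ln u \<le> 1/u - 1" using assms by (simp add: ln_div)
  hence "u * (- ln u) \<le> u * (1/u - 1)" using assms by (intro mult_left_mono) auto
  moreover have "u * (1/u - 1) = 1 - u" using assms by (simp add: field_simps)
  ultimately show "0 \<le> u * ln u - u + 1" by (simp add: algebra_simps)
  have "u * ln u \<le> u * (u - 1)" using assms ln_le_minus_one[of u] by (intro mult_left_mono) auto
  thus "u * ln u - u + 1 \<le> (u - 1)\<^sup>2" by (simp add: power2_eq_square algebra_simps)
qed

lemma taylor:
  assumes p: "(p::real) > 0" and x: "x \<ge> 0"
  shows "\<bar>x * (ln x)\<^sup>2 - p * (ln p)\<^sup>2 - ((ln p)\<^sup>2 + 2 * ln p) * (x - p)\<bar>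
           \<le> (x - p)\<^sup>2 * (1 + 2 * \<bar>ln p\<bar>) / p"
proof (cases "x = 0")
  case True
  have "\<bar>2 * p * ln p\<bar> \<le> p\<^sup>2 * (1 + 2 * \<bar>ln p\<bar>) / p"
    using p by (simp add: power2_eq_square abs_mult field_simps)
  thus ?thesis using True by (simp add: algebra_simps power2_eq_square)
next
  case False
  hence x: "x > 0" using x by simp
  define u where "u = x / p"
  have u: "u > 0" using x p by (simp add: u_def)
  have xu: "x = p * u" using p by (simp add: u_def)
  have lx: "ln x = ln p + ln u" using p u by (simp add: xu ln_mult)
  have R: "x * (ln x)\<^sup>2 - p * (ln p)\<^sup>2 - ((ln p)\<^sup>2 + 2 * ln p) * (x - p)
      = 2 * ln p * (p * (u * ln u - u + 1)) + p * (u * (ln u)\<^sup>2)"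
  proof -
    have "x * (ln x)\<^sup>2 = p * u * (ln p + ln u)\<^sup>2" using lx xu by simp
    thus ?thesis by (simp add: xu power2_eq_square algebra_simps)
  qed
  have e: "(x - p)\<^sup>2 / p = p * (u - 1)\<^sup>2" using p by (simp add: xu power2_eq_square field_simps)
  have a: "\<bar>2 * ln p * (p * (u * ln u - u + 1))\<bar> \<le> 2 * \<bar>ln p\<bar> * (p * (u - 1)\<^sup>2)"
    using L4[OF u] p by (simp add: abs_mult mult_left_mono)
  have b: "\<bar>p * (u * (ln u)\<^sup>2)\<bar> \<le> p * (u - 1)\<^sup>2"
    using L3[OF u] p u by (simp add: abs_mult mult_left_mono)
  have "(x - p)\<^sup>2 * (1 + 2 * \<bar>ln p\<bar>) / p = p * (u - 1)\<^sup>2 + 2 * \<bar>ln p\<bar> * (p * (u - 1)\<^sup>2)"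
  proof -
    have "(x - p)\<^sup>2 * (1 + 2 * \<bar>ln p\<bar>) / p = (x - p)\<^sup>2 / p * (1 + 2 * \<bar>ln p\<bar>)" by simp
    also have "\<dots> = p * (u - 1)\<^sup>2 * (1 + 2 * \<bar>ln p\<bar>)" using e by simp
    finally show ?thesis by (simp add: algebra_simps)
  qed
  thus ?thesis unfolding R using a b by linarith
qed



lemma finite_samples: "finite (set_pmf P) \<Longrightarrow> finite (set_pmf (samples n P))"
  unfolding samples_def by (subst set_Pi_pmf) auto

lemma integ_samples: "finite (set_pmf P) \<Longrightarrow> integrable (measure_pmf (samples n P)) (f :: _ \<Rightarrow> real)"
  by (intro integrable_measure_pmf_finite finite_samples)

lemma exp_ind: "measure_pmf.expectation P (\<lambda>x. of_bool (x = k) :: real) = pmf P k"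
proof -
  have "(\<lambda>x. of_bool (x = k) :: real) = indicator {k}" by (auto simp: indicator_def)
  thus ?thesis by (simp add: measure_pmf_single)
qed

lemma exp_comp:
  assumes "i < n"
  shows "measure_pmf.expectation (samples n P) (\<lambda>\<omega>. g (\<omega> i) :: real) = measure_pmf.expectation P g"
proof -
  have "measure_pmf.expectation (samples n P) (\<lambda>\<omega>. g (\<omega> i)) =
        measure_pmf.expectation (map_pmf (\<lambda>\<omega>. \<omega> i) (samples n P)) g"
    by (simp add: integral_map_pmf)
  also have "map_pmf (\<lambda>\<omega>. \<omega> i) (samples n P) = P"
    unfolding samples_def using assms by (subst Pi_pmf_component) auto
  finally show ?thesis .
qed

lemma exp_pair:
  assumes "i < n" "j < n" "i \<noteq> j" and fin: "finite (set_pmf P)"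
  shows "measure_pmf.expectation (samples n P) (\<lambda>\<omega>. of_bool (\<omega> i = k) * of_bool (\<omega> j = k) :: real)
         = pmf P k ^ 2"
proof -
  define f where "f = (\<lambda>x v. if x \<in> {i,j} then of_bool (v = k) else (1::real))"
  have eq: "(\<Prod>x\<in>{..<n}. f x (\<omega> x)) = of_bool (\<omega> i = k) * of_bool (\<omega> j = k)" for \<omega>
  proof -
    have "(\<Prod>x\<in>{..<n}. f x (\<omega> x)) = (\<Prod>x\<in>{..<n} \<inter> {x. x \<in> {i,j}}. of_bool (\<omega> x = k))
          * (\<Prod>x\<in>{..<n} \<inter> - {x. x \<in> {i,j}}. 1)"
      unfolding f_def by (rule prod.If_cases) auto
    also have "{..<n} \<inter> {x. x \<in> {i,j}} = {i,j}" using assms by auto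
    finally show ?thesis using assms by simp
  qed
  have "measure_pmf.expectation (samples n P) (\<lambda>\<omega>. \<Prod>x\<in>{..<n}. f x (\<omega> x))
        = (\<Prod>x\<in>{..<n}. measure_pmf.expectation P (f x))"
    unfolding samples_def
    by (rule expectation_prod_Pi_pmf) (auto simp: f_def fin intro!: integrable_measure_pmf_finite)
  also have "\<dots> = (\<Prod>x\<in>{..<n}. if x \<in> {i,j} then measure_pmf.expectation P (\<lambda>v. of_bool (v = k)) else measure_pmf.expectation P (\<lambda>v. 1))"
    by (intro prod.cong) (auto simp: f_def)
  also have "\<dots> = (\<Prod>x\<in>{..<n} \<inter> {x. x \<in> {i,j}}. measure_pmf.expectation P (\<lambda>v. of_bool (v = k)))
          * (\<Prod>x\<in>{..<n} \<inter> - {x. x \<in> {i,j}}. measure_pmf.expectation P (\<lambda>v. 1))"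
    by (rule prod.If_cases) auto
  also have "{..<n} \<inter> {x. x \<in> {i,j}} = {i,j}" using assms by auto
  finally show ?thesis using assms eq by (simp add: exp_ind power2_eq_square)
qed

definition Nc :: "nat \<Rightarrow> nat \<Rightarrow> (nat \<Rightarrow> nat) \<Rightarrow> real" where
  "Nc n k \<omega> = (\<Sum>i<n. of_bool (\<omega> i = k))"

lemma Nc_card: "Nc n k \<omega> = real (card {i\<in>{..<n}. \<omega> i = k})"
proof -
  have "{i\<in>{..<n}. \<omega> i = k} = {..<n} \<inter> {i. \<omega> i = k}" by auto
  thus ?thesis unfolding Nc_def by simp
qed

lemma mom1:
  assumes fin: "finite (set_pmf P)"
  shows "measure_pmf.expectation (samples n P) (Nc n k) = real n * pmf P k"
proof -
  have "measure_pmf.expectation (samples n P) (Nc n k) =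
        (\<Sum>i<n. measure_pmf.expectation (samples n P) (\<lambda>\<omega>. of_bool (\<omega> i = k)))"
    unfolding Nc_def by (rule Bochner_Integration.integral_sum) (simp add: integ_samples fin)
  also have "\<dots> = (\<Sum>i<n. pmf P k)"
    by (intro sum.cong refl) (simp add: exp_comp[where g="\<lambda>v. of_bool (v = k)"] exp_ind)
  finally show ?thesis by simp
qed

lemma mom2:
  assumes fin: "finite (set_pmf P)"
  shows "measure_pmf.expectation (samples n P) (\<lambda>\<omega>. (Nc n k \<omega>)\<^sup>2)
         = real n * pmf P k + real n * (real n - 1) * (pmf P k)\<^sup>2"
proof -
  let ?E = "measure_pmf.expectation (samples n P)"
  let ?p = "pmf P k"
  have sq: "(Nc n k \<omega>)\<^sup>2 = (\<Sum>i<n. \<Sum>j<n. of_bool (\<omega> i = k) * of_bool (\<omega> j = k))" for \<omega>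
    unfolding Nc_def power2_eq_square by (rule sum_product)
  have "?E (\<lambda>\<omega>. (Nc n k \<omega>)\<^sup>2) = (\<Sum>i<n. \<Sum>j<n. ?E (\<lambda>\<omega>. of_bool (\<omega> i = k) * of_bool (\<omega> j = k)))"
    unfolding sq
    by (subst Bochner_Integration.integral_sum, simp add: integ_samples fin,
        intro sum.cong refl, rule Bochner_Integration.integral_sum, simp add: integ_samples fin)
  also have "\<dots> = (\<Sum>i<n. \<Sum>j<n. if i = j then ?p else ?p ^ 2)"
  proof (intro sum.cong refl)
    fix i j assume ij: "i \<in> {..<n}" "j \<in> {..<n}"
    show "?E (\<lambda>\<omega>. of_bool (\<omega> i = k) * of_bool (\<omega> j = k) :: real) = (if i = j then ?p else ?p ^ 2)"
    proof (cases "i = j")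
      case True
      have "?E (\<lambda>\<omega>. of_bool (\<omega> i = k) * of_bool (\<omega> j = k) :: real) = ?E (\<lambda>\<omega>. of_bool (\<omega> i = k))"
        using True by (intro Bochner_Integration.integral_cong) (auto simp: of_bool_def)
      thus ?thesis using True ij by (simp add: exp_comp[where g="\<lambda>v. of_bool (v = k)"] exp_ind)
    next
      case False
      thus ?thesis using ij exp_pair[OF _ _ False fin] by simp
    qed
  qed
  also have "\<dots> = (\<Sum>i<n. ?p + (real n - 1) * ?p ^ 2)"
  proof (intro sum.cong refl)
    fix i assume i: "i \<in> {..<n}"
    have "(\<Sum>j<n. if i = j then ?p else ?p ^ 2) = (if i = i then ?p else ?p ^ 2) + (\<Sum>j\<in>{..<n} - {i}. if i = j then ?p else ?p ^ 2)"
      using i by (subst sum.remove[of _ i]) auto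
    also have "(\<Sum>j\<in>{..<n} - {i}. if i = j then ?p else ?p ^ 2) = (\<Sum>j\<in>{..<n} - {i}. ?p ^ 2)"
      by (intro sum.cong) auto
    also have "\<dots> = (real n - 1) * ?p ^ 2" using i by (simp add: of_nat_diff)
    finally show "(\<Sum>j<n. if i = j then ?p else ?p ^ 2) = ?p + (real n - 1) * ?p ^ 2" by simp
  qed
  finally show ?thesis by (simp add: algebra_simps)
qed



lemma PU: assumes "m \<le> n" "n \<ge> 1"
  shows "real m / n * (ln (real m / n))\<^sup>2 \<le> real m / n * (ln n)\<^sup>2"
proof (cases "m = 0")
  case False
  have l: "ln (real m / n) = ln m - ln n" using False assms by (simp add: ln_div)
  have "ln m \<le> ln n" "0 \<le> ln m" using False assms by auto
  hence "\<bar>ln m - ln n\<bar> \<le> \<bar>ln n\<bar>" by auto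
  hence "(ln m - ln n)\<^sup>2 \<le> (ln n)\<^sup>2" using abs_le_square_iff by blast
  thus ?thesis unfolding l using assms by (intro mult_left_mono) auto
qed simp

lemma PL: assumes "m \<le> n" "n \<ge> 1"
  shows "real m / n * (ln n)\<^sup>2 - 2 * ln n * ((real m)\<^sup>2 - m) / n \<le> real m / n * (ln (real m / n))\<^sup>2"
proof (cases "m = 0")
  case False
  have l: "ln (real m / n) = ln m - ln n" using False assms by (simp add: ln_div)
  have ln0: "0 \<le> ln n" using assms by simp
  have a: "ln m \<le> real m - 1" using False by (intro ln_le_minus_one) auto
  have "real m * (ln n)\<^sup>2 - 2 * ln n * ((real m)\<^sup>2 - m) \<le> real m * ((ln n)\<^sup>2 - 2 * ln n * ln m)"
  proof -
    have "real m * (2 * ln n * ln m) \<le> real m * (2 * ln n * (real m - 1))"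
      using a ln0 by (intro mult_left_mono) auto
    thus ?thesis by (simp add: algebra_simps power2_eq_square)
  qed
  also have "\<dots> \<le> real m * (ln m - ln n)\<^sup>2"
    by (intro mult_left_mono) (auto simp: power2_eq_square algebra_simps)
  finally have "(real m * (ln n)\<^sup>2 - 2 * ln n * ((real m)\<^sup>2 - m)) / n \<le> real m * (ln m - ln n)\<^sup>2 / n"
    using assms by (intro divide_right_mono) auto
  moreover have "real m / n * (ln n)\<^sup>2 - 2 * ln n * ((real m)\<^sup>2 - m) / n = (real m * (ln n)\<^sup>2 - 2 * ln n * ((real m)\<^sup>2 - m)) / n"
    by (simp add: diff_divide_distrib)
  moreover have "real m / n * (ln (real m / n))\<^sup>2 = real m * (ln m - ln n)\<^sup>2 / n" unfolding l by simp
  ultimately show ?thesis by linarith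
qed simp

lemma Small:
  assumes n: "(n::real) \<ge> 3" and p: "0 \<le> p" "p < 1/n"
  shows "p * (ln n)\<^sup>2 - p * (ln p)\<^sup>2 \<le> 0"
    and "p * (ln p)\<^sup>2 - (p * (ln n)\<^sup>2 - 2 * ln n * (n * (n - 1) * p\<^sup>2) / n) \<le> 8 * ln n / n"
proof -
  have lnn: "1 \<le> ln n"
  proof -
    have "exp 1 \<le> n" using exp_le n by linarith
    thus ?thesis using n by (subst ln_ge_iff) auto
  qed
  show "p * (ln n)\<^sup>2 - p * (ln p)\<^sup>2 \<le> 0"
  proof (cases "p = 0")
    case False
    hence pp: "p > 0" using p by simp
    have "ln p < ln (1/n)" using pp p n by simp
    hence "ln p < - ln n" using n by (simp add: ln_div)
    hence "\<bar>ln n\<bar> \<le> \<bar>ln p\<bar>" using lnn by auto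
    hence "(ln n)\<^sup>2 \<le> (ln p)\<^sup>2" using abs_le_square_iff by blast
    thus ?thesis using pp by (simp add: mult_left_mono)
  qed simp
  show "p * (ln p)\<^sup>2 - (p * (ln n)\<^sup>2 - 2 * ln n * (n * (n - 1) * p\<^sup>2) / n) \<le> 8 * ln n / n"
  proof (cases "p = 0")
    case True thus ?thesis using lnn n by simp
  next
    case False
    hence pp: "p > 0" using p by simp
    define t where "t = n * p"
    have t: "0 < t" "t < 1" using pp p n by (auto simp: t_def field_simps)
    have pt: "p = t / n" using n by (simp add: t_def)
    have lp: "ln p = ln t - ln n" using t n by (simp add: pt ln_div)
    have t1: "t * (ln t)\<^sup>2 \<le> 1"
    proof -
      have "t * (ln t)\<^sup>2 \<le> (t - 1)\<^sup>2" by (rule L3) (use t in auto)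
      also have "\<dots> = 1 - t * (2 - t)" by (simp add: power2_eq_square algebra_simps)
      also have "\<dots> \<le> 1" using t by simp
      finally show ?thesis .
    qed
    have t2: "t * (- ln t) \<le> 1"
    proof -
      have "ln (1/t) \<le> 1/t - 1" using t by (intro ln_le_minus_one) auto
      hence "- ln t \<le> 1/t" using t by (simp add: ln_div)
      hence "t * (- ln t) \<le> t * (1/t)" using t by (intro mult_left_mono) auto
      thus ?thesis using t by simp
    qed
    have t3: "t\<^sup>2 \<le> 1" using t by (intro power_le_one) auto
    have "p * (ln p)\<^sup>2 - (p * (ln n)\<^sup>2 - 2 * ln n * (n * (n - 1) * p\<^sup>2) / n)
        = (t * (ln t)\<^sup>2 + 2 * (t * (- ln t)) * ln n + 2 * ln n * ((n - 1) / n) * t\<^sup>2) / n"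
      apply (unfold lp) apply (unfold pt) using n by (simp add: field_simps power2_eq_square)
    also have "\<dots> \<le> (1 + 2 * ln n + 2 * ln n) / n"
    proof -
      have "2 * (t * (- ln t)) * ln n \<le> 2 * ln n" using mult_right_mono[OF t2, of "ln n"] lnn by (simp add: mult_ac)
      moreover have "2 * ln n * ((n - 1) / n) * t\<^sup>2 \<le> 2 * ln n"
      proof -
        have "((n - 1) / n) * t\<^sup>2 \<le> 1" using t3 n by (intro mult_le_one) auto
        hence "2 * ln n * (((n - 1) / n) * t\<^sup>2) \<le> 2 * ln n * 1" using lnn by (intro mult_left_mono) auto
        thus ?thesis by (simp add: mult.assoc)
      qed
      ultimately have "t * (ln t)\<^sup>2 + 2 * (t * (- ln t)) * ln n + 2 * ln n * ((n - 1) / n) * t\<^sup>2 \<le> 1 + 2 * ln n + 2 * ln n"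
        using t1 by linarith
      thus ?thesis using n by (intro divide_right_mono) auto
    qed
    also have "\<dots> \<le> 8 * ln n / n" using lnn n by (intro divide_right_mono) auto
    finally show ?thesis .
  qed
qed



lemma emp_Nc: "empirical n \<omega> k = Nc n k \<omega> / real n"
  unfolding empirical_def Nc_card ..

lemma Nc_bounds: "\<exists>m. m \<le> n \<and> Nc n k \<omega> = real m"
  unfolding Nc_card by (intro exI[of _ "card {i\<in>{..<n}. \<omega> i = k}"]) (auto intro: card_mono[of "{..<n}", simplified])

lemma per_symbol:
  assumes fin: "finite (set_pmf P)" and n: "n \<ge> 3"
  shows "\<bar>measure_pmf.expectation (samples n P) (\<lambda>\<omega>. empirical n \<omega> k * (ln (empirical n \<omega> k))\<^sup>2)
          - pmf P k * (ln (pmf P k))\<^sup>2\<bar> \<le> 8 * ln n / n"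
proof -
  let ?M = "samples n P"
  let ?E = "measure_pmf.expectation ?M"
  let ?p = "pmf P k"
  define X where "X = (\<lambda>\<omega>. Nc n k \<omega> / real n)"
  have nn: "real n \<ge> 3" using n by simp
  have lnn: "1 \<le> ln (real n)"
  proof -
    have "exp 1 \<le> real n" using exp_le nn by linarith
    thus ?thesis using nn by (subst ln_ge_iff) auto
  qed
  have I: "integrable (measure_pmf ?M) f" for f :: "_ \<Rightarrow> real" by (rule integ_samples[OF fin])
  have EX: "?E X = ?p" unfolding X_def using nn by (simp add: mom1[OF fin])
  have EN2: "?E (\<lambda>\<omega>. (Nc n k \<omega>)\<^sup>2) = real n * ?p + real n * (real n - 1) * ?p\<^sup>2" by (rule mom2[OF fin])
  have EN: "?E (Nc n k) = real n * ?p" by (rule mom1[OF fin])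
  have lhs: "?E (\<lambda>\<omega>. empirical n \<omega> k * (ln (empirical n \<omega> k))\<^sup>2) = ?E (\<lambda>\<omega>. X \<omega> * (ln (X \<omega>))\<^sup>2)"
    unfolding X_def emp_Nc ..
  have p01: "0 \<le> ?p" "?p \<le> 1" by (auto simp: pmf_le_1)
  show ?thesis
  proof (cases "?p \<ge> 1 / n")
    case True
    have pp: "?p > 0" using True nn by (smt (verit) divide_pos_pos)
    define c where "c = (ln ?p)\<^sup>2 + 2 * ln ?p"
    define K where "K = (1 + 2 * \<bar>ln ?p\<bar>) / ?p"
    define R where "R = (\<lambda>\<omega>. X \<omega> * (ln (X \<omega>))\<^sup>2 - ?p * (ln ?p)\<^sup>2 - c * (X \<omega> - ?p))"
    have ER: "?E R = ?E (\<lambda>\<omega>. X \<omega> * (ln (X \<omega>))\<^sup>2) - ?p * (ln ?p)\<^sup>2"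
      unfolding R_def using EX by (simp add: I algebra_simps)
    have EV: "?E (\<lambda>\<omega>. (X \<omega> - ?p)\<^sup>2) = ?p * (1 - ?p) / n"
    proof -
      have "(\<lambda>\<omega>. (X \<omega> - ?p)\<^sup>2) = (\<lambda>\<omega>. (Nc n k \<omega>)\<^sup>2 / (real n)\<^sup>2 - 2 * ?p / n * Nc n k \<omega> + ?p\<^sup>2)"
        unfolding X_def using nn by (auto simp: power2_eq_square field_simps)
      hence "?E (\<lambda>\<omega>. (X \<omega> - ?p)\<^sup>2) = ?E (\<lambda>\<omega>. (Nc n k \<omega>)\<^sup>2) / (real n)\<^sup>2 - 2 * ?p / n * ?E (Nc n k) + ?p\<^sup>2"
        by (simp add: I)
      also have "\<dots> = ?p * (1 - ?p) / n" unfolding EN2 EN using nn by (simp add: power2_eq_square field_simps)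
      finally show ?thesis .
    qed
    have "\<bar>?E R\<bar> \<le> ?E (\<lambda>\<omega>. \<bar>R \<omega>\<bar>)" by (rule integral_abs_bound)
    also have "\<dots> \<le> ?E (\<lambda>\<omega>. (X \<omega> - ?p)\<^sup>2 * K)"
    proof (rule integral_mono[OF I I])
      fix \<omega>
      have "X \<omega> \<ge> 0" unfolding X_def Nc_card by simp
      thus "\<bar>R \<omega>\<bar> \<le> (X \<omega> - ?p)\<^sup>2 * K"
        unfolding R_def c_def K_def using taylor[OF pp, of "X \<omega>"] by simp
    qed
    also have "\<dots> = ?p * (1 - ?p) / n * K" using EV by simp
    also have "\<dots> = (1 - ?p) * (1 + 2 * \<bar>ln ?p\<bar>) / n" unfolding K_def using pp by simp
    also have "\<dots> \<le> 1 * (1 + 2 * ln n) / n"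
    proof -
      have "ln (1 / real n) \<le> ln ?p" using True nn pp by (subst ln_le_cancel_iff) auto
      hence "- ln ?p \<le> ln n" using nn by (simp add: ln_div)
      moreover have l0: "ln ?p \<le> 0" using pp p01 by simp
      ultimately have "\<bar>ln ?p\<bar> \<le> ln n" by simp
      hence h: "1 + 2 * \<bar>ln ?p\<bar> \<le> 1 + 2 * ln n" by simp
      have "(1 - ?p) * (1 + 2 * \<bar>ln ?p\<bar>) \<le> 1 * (1 + 2 * ln n)"
      proof (rule mult_mono)
        show "0 \<le> 1 + 2 * \<bar>ln ?p\<bar>" using abs_ge_zero[of "ln ?p"] by linarith
      qed (use p01 h in auto)
      thus ?thesis using nn by (intro divide_right_mono) auto
    qed
    also have "\<dots> \<le> 8 * ln n / n" using lnn nn by (intro divide_right_mono) auto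
    finally show ?thesis unfolding lhs using ER by simp
  next
    case False
    have up: "?E (\<lambda>\<omega>. X \<omega> * (ln (X \<omega>))\<^sup>2) \<le> ?E (\<lambda>\<omega>. X \<omega> * (ln n)\<^sup>2)"
    proof (rule integral_mono[OF I I])
      fix \<omega>
      obtain m where m: "m \<le> n" "Nc n k \<omega> = real m" using Nc_bounds by blast
      show "X \<omega> * (ln (X \<omega>))\<^sup>2 \<le> X \<omega> * (ln n)\<^sup>2"
        unfolding X_def m(2) using PU[of m "real n"] m nn by simp
    qed
    have lo: "?E (\<lambda>\<omega>. X \<omega> * (ln n)\<^sup>2 - 2 * ln n * ((Nc n k \<omega>)\<^sup>2 - Nc n k \<omega>) / n) \<le> ?E (\<lambda>\<omega>. X \<omega> * (ln (X \<omega>))\<^sup>2)"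
    proof (rule integral_mono[OF I I])
      fix \<omega>
      obtain m where m: "m \<le> n" "Nc n k \<omega> = real m" using Nc_bounds by blast
      show "X \<omega> * (ln n)\<^sup>2 - 2 * ln n * ((Nc n k \<omega>)\<^sup>2 - Nc n k \<omega>) / n \<le> X \<omega> * (ln (X \<omega>))\<^sup>2"
        unfolding X_def m(2) using PL[of m "real n"] m nn by simp
    qed
    have e1: "?E (\<lambda>\<omega>. X \<omega> * (ln n)\<^sup>2) = ?p * (ln n)\<^sup>2" using EX by simp
    have e2: "?E (\<lambda>\<omega>. X \<omega> * (ln n)\<^sup>2 - 2 * ln n * ((Nc n k \<omega>)\<^sup>2 - Nc n k \<omega>) / n)
         = ?p * (ln n)\<^sup>2 - 2 * ln n * (n * (n - 1) * ?p\<^sup>2) / n"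
    proof -
      have "?E (\<lambda>\<omega>. X \<omega> * (ln n)\<^sup>2 - 2 * ln n * ((Nc n k \<omega>)\<^sup>2 - Nc n k \<omega>) / n)
          = ?E X * (ln n)\<^sup>2 - 2 * ln n * (?E (\<lambda>\<omega>. (Nc n k \<omega>)\<^sup>2) - ?E (Nc n k)) / n"
        by (simp add: I)
      also have "\<dots> = ?p * (ln n)\<^sup>2 - 2 * ln n * (n * (n - 1) * ?p\<^sup>2) / n"
        unfolding EX EN2 EN by (simp add: algebra_simps)
      finally show ?thesis .
    qed
    have s1: "?p * (ln n)\<^sup>2 - ?p * (ln ?p)\<^sup>2 \<le> 0"
      and s2: "?p * (ln ?p)\<^sup>2 - (?p * (ln n)\<^sup>2 - 2 * ln n * (n * (n - 1) * ?p\<^sup>2) / n) \<le> 8 * ln n / n"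
      using Small[OF nn p01(1)] False by auto
    have "0 \<le> 8 * ln (real n) / n" using lnn by simp
    thus ?thesis unfolding lhs using up lo e1 e2 s1 s2 by linarith
  qed
qed



theorem mainTheorem7:
  shows "\<exists>C N0. \<forall>S::nat. \<forall>P::nat pmf. \<forall>n::nat.
           S \<ge> 1 \<longrightarrow> set_pmf P \<subseteq> {1..S} \<longrightarrow> n \<ge> N0 \<longrightarrow>
           \<bar>bias S P n\<bar> \<le> C * real S * ln (real n) / real n"
proof (intro exI[of _ "8::real"] exI[of _ "3::nat"] allI impI)
  fix S :: nat and P :: "nat pmf" and n :: nat
  assume S: "S \<ge> 1" and sub: "set_pmf P \<subseteq> {1..S}" and n: "n \<ge> 3"
  have fin: "finite (set_pmf P)" using sub finite_subset by blast
  let ?E = "measure_pmf.expectation (samples n P)"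
  have b: "bias S P n = (\<Sum>k\<in>{1..S}. ?E (\<lambda>\<omega>. empirical n \<omega> k * (ln (empirical n \<omega> k))\<^sup>2)
                       - pmf P k * (ln (pmf P k))\<^sup>2)"
    unfolding bias_def Qfun_def
    by (subst Bochner_Integration.integral_sum) (auto simp: integ_samples fin sum_subtractf)
  have "\<bar>bias S P n\<bar> \<le> (\<Sum>k\<in>{1..S}. \<bar>?E (\<lambda>\<omega>. empirical n \<omega> k * (ln (empirical n \<omega> k))\<^sup>2)
                       - pmf P k * (ln (pmf P k))\<^sup>2\<bar>)"
    unfolding b by (rule sum_abs)
  also have "\<dots> \<le> (\<Sum>k\<in>{1..S}. 8 * ln (real n) / real n)"
    by (intro sum_mono per_symbol fin n)
  also have "\<dots> = 8 * real S * ln (real n) / real n" by simp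
  finally have "\<bar>bias S P n\<bar> \<le> 8 * real S * ln (real n) / real n" .
  thus "\<bar>bias S P n\<bar> \<le> 8 * real S * ln (real n) / real n" by simp
qed


end
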